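(* Let $\mathbb{T}$ be a time scale unbounded from above, $t_0\in\mathbb{T}$, $b,c:\mathbb{T}\to[0,\infty)$ with $c-b\in\mathcal{R}^+$, $x_0>0$, $y_0>0$, $z_0\ge0$, $N=x_0+y_0+z_0$. Assume there is $M>0$ with $b(t)\le M(c-b)(t)$ for all $t\in\mathbb{T}$, and $\int_{t_0}^{\infty}(c-b)(\tau)\,\Delta\tau=\infty$. Then every solution $(x,y,z)$ of $$x^{\Delta}=-\frac{b(t)\,x\,y^{\sigma}}{x+y},\qquad y^{\Delta}=\frac{b(t)\,x\,y^{\sigma}}{x+y}-c(t)\,y^{\sigma},\qquad z^{\Delta}=c(t)\,y^{\sigma},$$ with $x,y:\mathbb{T}\to(0,\infty)$, $z:\mathbb{T}\to[0,\infty)$, $x(t_0)=x_0$, $y(t_0)=y_0$, $z(t_0)=z_0$, converges as $t\to\infty$ to $(\alpha,0,N-\alpha)$ for some $\alpha\in(0,N)$.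
   Context: A time scale $\mathbb{T}$ is a nonempty closed subset of $\mathbb{R}$. $\sigma(t)=\inf\{s\in\mathbb{T}:s>t\}$, $\mu(t)=\sigma(t)-t$, $f^{\sigma}=f\circ\sigma$. $f^{\Delta}$ is the delta (Hilger) derivative: for every $\varepsilon>0$ there is $\delta>0$ with $|f(\sigma(t))-f(s)-f^{\Delta}(t)(\sigma(t)-s)|\le\varepsilon|\sigma(t)-s|$ for $s\in(t-\delta,t+\delta)\cap\mathbb{T}$. $\int\cdot\,\Delta\tau$ is the delta integral on $\mathbb{T}$. $p\in\mathcal{R}^+$ means $p$ is rd-continuous (continuous at right-dense points, finite left limits at left-dense points) and $1+\mu(t)p(t)>0$ for all $t\in\mathbb{T}$. *)

theory Defs
  imports "HOL-Analysis.Analysis"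
begin

text \<open>Time scales: a time scale is a nonempty closed subset T of the reals.
  Functions on T are modelled as total functions real => real whose values
  outside T are irrelevant.\<close>

definition time_scale :: "real set \<Rightarrow> bool" where
  "time_scale T \<longleftrightarrow> T \<noteq> {} \<and> closed T"

definition ts_sigma :: "real set \<Rightarrow> real \<Rightarrow> real" where
  "ts_sigma T t = (if {s\<in>T. s > t} = {} then t else Inf {s\<in>T. s > t})"

definition ts_rho :: "real set \<Rightarrow> real \<Rightarrow> real" where
  "ts_rho T t = (if {s\<in>T. s < t} = {} then t else Sup {s\<in>T. s < t})"

definition ts_mu :: "real set \<Rightarrow> real \<Rightarrow> real" where
  "ts_mu T t = ts_sigma T t - t"

definition ts_kappa :: "real set \<Rightarrow> real set" where
  "ts_kappa T = {t\<in>T. \<not> ((\<forall>s\<in>T. s \<le> t) \<and> ts_rho T t < t)}"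

definition has_delta_derivative :: "real set \<Rightarrow> (real \<Rightarrow> real) \<Rightarrow> real \<Rightarrow> real \<Rightarrow> bool" where
  "has_delta_derivative T f D t \<longleftrightarrow>
     (\<forall>\<epsilon>>0. \<exists>\<delta>>0. \<forall>s\<in>T. \<bar>s - t\<bar> < \<delta> \<longrightarrow>
        \<bar>f (ts_sigma T t) - f s - D * (ts_sigma T t - s)\<bar> \<le> \<epsilon> * \<bar>ts_sigma T t - s\<bar>)"

definition rd_continuous :: "real set \<Rightarrow> (real \<Rightarrow> real) \<Rightarrow> bool" where
  "rd_continuous T f \<longleftrightarrow>
     (\<forall>t\<in>T. (ts_sigma T t = t \<longrightarrow> continuous (at t within T) f) \<and>
            (ts_rho T t = t \<and> (\<exists>s\<in>T. s < t) \<longrightarrow>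
               (\<exists>L. (f \<longlongrightarrow> L) (at t within (T \<inter> {..<t})))))"

definition pos_regressive :: "real set \<Rightarrow> (real \<Rightarrow> real) \<Rightarrow> bool" where
  "pos_regressive T p \<longleftrightarrow> rd_continuous T p \<and> (\<forall>t\<in>T. 1 + ts_mu T t * p t > 0)"

definition delta_integral :: "real set \<Rightarrow> (real \<Rightarrow> real) \<Rightarrow> real \<Rightarrow> real \<Rightarrow> real" where
  "delta_integral T f a b =
     (let F = (SOME F. \<forall>t\<in>ts_kappa T. has_delta_derivative T F (f t) t) in F b - F a)"

definition delta_integral_diverges :: "real set \<Rightarrow> (real \<Rightarrow> real) \<Rightarrow> real \<Rightarrow> bool" where
  "delta_integral_diverges T f a \<longleftrightarrow>
     filterlim (\<lambda>t. delta_integral T f a t) at_top (inf at_top (principal T))"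

end

theory Submission
  imports Defs
begin

lemma sig_props:
  assumes cl: "closed T" and t: "t \<in> T" and ex: "\<exists>s\<in>T. s > t"
  shows "ts_sigma T t \<in> T" "ts_sigma T t \<ge> t" "\<And>s. s \<in> T \<Longrightarrow> t < s \<Longrightarrow> ts_sigma T t \<le> s"
proof -
  let ?S = "{s\<in>T. s > t}"
  have ne: "?S \<noteq> {}" using ex by auto
  have bdd: "bdd_below ?S" by (auto intro!: bdd_belowI[of _ t])
  have sig: "ts_sigma T t = Inf ?S" unfolding ts_sigma_def if_not_P[OF ne] ..
  show ge: "ts_sigma T t \<ge> t" unfolding sig by (rule cInf_greatest[OF ne]) auto
  show "\<And>s. s \<in> T \<Longrightarrow> t < s \<Longrightarrow> ts_sigma T t \<le> s" unfolding sig by (rule cInf_lower[OF _ bdd]) auto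
  have "Inf ?S \<in> closure ?S" by (rule closure_contains_Inf[OF ne bdd])
  also have "closure ?S \<subseteq> T" using cl by (intro closure_minimal) auto
  finally show "ts_sigma T t \<in> T" unfolding sig .
qed

lemma sig_gap:
  assumes cl: "closed T" and t: "t \<in> T" and ex: "\<exists>s\<in>T. s > t" and s: "s \<in> T" "t < s" "s < ts_sigma T t"
  shows False
  using sig_props(3)[OF cl t ex s(1,2)] s(3) by simp

lemma sig_eq:
  assumes p: "p \<in> T" and m: "m \<in> T" "p < m" and gap: "\<forall>u\<in>T. \<not> (p < u \<and> u < m)"
  shows "ts_sigma T p = m"
proof -
  let ?S = "{s\<in>T. s > p}"
  have ne: "?S \<noteq> {}" using m by auto
  have "Inf ?S = m"
  proof (rule cInf_eq_minimum)
    show "m \<in> ?S" using m by auto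
    show "\<And>x. x \<in> ?S \<Longrightarrow> m \<le> x" using gap by force
  qed
  then show ?thesis unfolding ts_sigma_def if_not_P[OF ne] .
qed

lemma sig_rd:
  assumes t: "t \<in> T" and ex: "\<exists>s\<in>T. s > t" and eq: "ts_sigma T t = t" and d: "d > 0"
  shows "\<exists>s\<in>T. t < s \<and> s < t + d"
proof -
  let ?S = "{s\<in>T. s > t}"
  have ne: "?S \<noteq> {}" using ex by auto
  have "Inf ?S < t + d" using eq d unfolding ts_sigma_def if_not_P[OF ne] by simp
  then obtain s where "s \<in> ?S" "s < t + d" using cInf_lessD[OF ne] by blast
  then show ?thesis by auto
qed

lemma sig_rd2:
  assumes t: "t \<in> T" and dense: "\<forall>d>0. \<exists>s\<in>T. t < s \<and> s < t + d"
  shows "ts_sigma T t = t"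
proof -
  let ?S = "{s\<in>T. s > t}"
  have ne: "?S \<noteq> {}" using dense[rule_format, of 1] by auto
  have bdd: "bdd_below ?S" by (auto intro!: bdd_belowI[of _ t])
  have "Inf ?S = t"
  proof (rule antisym)
    show "t \<le> Inf ?S" by (rule cInf_greatest[OF ne]) auto
    show "Inf ?S \<le> t"
    proof (rule ccontr)
      assume "\<not> Inf ?S \<le> t"
      then obtain s where "s \<in> T" "t < s" "s < t + (Inf ?S - t)" using dense[rule_format, of "Inf ?S - t"] by auto
      moreover have "Inf ?S \<le> s" using \<open>s\<in>T\<close> \<open>t<s\<close> by (intro cInf_lower[OF _ bdd]) auto
      ultimately show False by simp
    qed
  qed
  then show ?thesis unfolding ts_sigma_def if_not_P[OF ne] .
qed

lemma ts_mono_gen: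
  fixes \<phi> :: "real \<Rightarrow> real"
  assumes cl: "closed T" and unb: "\<forall>r. \<exists>t\<in>T. t > r" and s: "s \<in> T" and r: "r \<in> T" and sr: "s \<le> r"
    and cont: "\<And>t. t \<in> T \<Longrightarrow> (\<phi> \<longlongrightarrow> \<phi> t) (at t within T)"
    and rs: "\<And>t. t \<in> T \<Longrightarrow> ts_sigma T t > t \<Longrightarrow> \<phi> t \<le> \<phi> (ts_sigma T t)"
    and rd: "\<And>t e. t \<in> T \<Longrightarrow> ts_sigma T t = t \<Longrightarrow> e > 0 \<Longrightarrow>
               \<exists>d>0. \<forall>u\<in>T. t < u \<and> u < t + d \<longrightarrow> \<phi> t - e * (u - t) \<le> \<phi> u"
  shows "\<phi> s \<le> \<phi> r"
proof -
  have ex: "\<exists>s\<in>T. s > t" for t using unb by auto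
  have key: "\<phi> s \<le> \<phi> r + e * (r - s)" if e: "e > 0" for e
  proof (rule ccontr)
    define B where "B = {u\<in>T. s \<le> u \<and> u \<le> r \<and> \<phi> u + e*(u-s) < \<phi> s}"
    assume "\<not> \<phi> s \<le> \<phi> r + e * (r - s)"
    then have rB: "r \<in> B" using r sr by (auto simp: B_def)
    then have neB: "B \<noteq> {}" by auto
    have bddB: "bdd_below B" by (auto simp: B_def intro!: bdd_belowI[of _ s])
    define m where "m = Inf B"
    have ms: "s \<le> m" unfolding m_def by (rule cInf_greatest[OF neB]) (auto simp: B_def)
    have mr: "m \<le> r" unfolding m_def by (rule cInf_lower[OF rB bddB])
    have "m \<in> closure B" unfolding m_def by (rule closure_contains_Inf[OF neB bddB])
    also have "closure B \<subseteq> T" using cl by (intro closure_minimal) (auto simp: B_def)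
    finally have mT: "m \<in> T" .
    have good: "\<phi> s \<le> \<phi> u + e*(u-s)" if "u \<in> T" "s \<le> u" "u < m" for u
    proof (rule ccontr)
      assume "\<not> ?thesis"
      then have "u \<in> B" using that mr by (auto simp: B_def)
      then have "m \<le> u" unfolding m_def by (rule cInf_lower[OF _ bddB])
      then show False using that by simp
    qed
    show False
    proof (cases "\<phi> m + e*(m-s) < \<phi> s")
      case True
      then have sm: "s < m" using ms by (cases "s = m") auto
      define P where "P = {u\<in>T. s \<le> u \<and> u < m}"
      have neP: "P \<noteq> {}" using s sm by (auto simp: P_def)
      have bddP: "bdd_above P" by (rule bdd_aboveI[of _ m]) (auto simp: P_def)
      define p where "p = Sup P"
      have pm: "p \<le> m" unfolding p_def by (rule cSup_least[OF neP]) (auto simp: P_def)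
      have ps: "s \<le> p" unfolding p_def by (rule cSup_upper[OF _ bddP]) (use s sm in \<open>auto simp: P_def\<close>)
      have "p \<in> closure P" unfolding p_def by (rule closure_contains_Sup[OF neP bddP])
      also have "closure P \<subseteq> T" using cl by (intro closure_minimal) (auto simp: P_def)
      finally have pT: "p \<in> T" .
      show False
      proof (cases "p < m")
        case True
        have gap: "\<forall>u\<in>T. \<not> (p < u \<and> u < m)"
        proof (intro ballI notI)
          fix u assume "u \<in> T" "p < u \<and> u < m"
          then have "u \<in> P" using ps by (auto simp: P_def)
          then have "u \<le> p" unfolding p_def by (rule cSup_upper[OF _ bddP])
          then show False using \<open>p < u \<and> u < m\<close> by simp
        qed
        have sp: "ts_sigma T p = m" by (rule sig_eq[OF pT mT True gap])
        have "\<phi> p \<le> \<phi> m" using rs[OF pT] sp True by simp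
        moreover have "\<phi> s \<le> \<phi> p + e*(p-s)" by (rule good[OF pT ps True])
        ultimately have "\<phi> s \<le> \<phi> m + e*(m-s)" using pm e
          by (smt (verit) mult_left_mono)
        then show False using \<open>\<phi> m + e*(m-s) < \<phi> s\<close> by simp
      next
        case False
        then have pm': "p = m" using pm by simp
        define \<eta> where "\<eta> = \<phi> s - \<phi> m - e*(m-s)"
        have eta: "\<eta> > 0" using \<open>\<phi> m + e*(m-s) < \<phi> s\<close> by (simp add: \<eta>_def)
        from cont[OF mT] have "\<forall>\<^sub>F u in at m within T. dist (\<phi> u) (\<phi> m) < \<eta>"
          using eta by (simp add: tendsto_iff)
        then obtain d where d: "d > 0" "\<And>u. u \<in> T \<Longrightarrow> u \<noteq> m \<Longrightarrow> dist u m < d \<Longrightarrow> dist (\<phi> u) (\<phi> m) < \<eta>"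
          unfolding eventually_at by blast
        have "m - d < Sup P" using d pm' p_def by simp
        then obtain u where uP: "u \<in> P" "m - d < u" using less_cSupE[OF _ neP] by blast
        then have u: "u \<in> T" "s \<le> u" "u < m" by (auto simp: P_def)
        have "dist (\<phi> u) (\<phi> m) < \<eta>" using d(2)[OF u(1)] u uP by (auto simp: dist_real_def)
        moreover have "\<phi> s \<le> \<phi> u + e*(u-s)" by (rule good[OF u])
        moreover have "e*(u-s) \<le> e*(m-s)" using u e by (intro mult_left_mono) auto
        ultimately show False by (auto simp: dist_real_def \<eta>_def)
      qed
    next
      case False
      then have mB: "m \<notin> B" by (auto simp: B_def)
      have sigm: "ts_sigma T m = m"
      proof (rule ccontr)
        assume ne: "ts_sigma T m \<noteq> m"
        have "ts_sigma T m \<le> m" unfolding m_def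
        proof (rule cInf_greatest[OF neB])
          fix b assume "b \<in> B"
          then have "b \<in> T" "m \<le> b" "b \<noteq> m" using mB cInf_lower[OF _ bddB] m_def by (auto simp: B_def)
          then show "ts_sigma T (Inf B) \<le> b" using sig_props(3)[OF cl mT ex[of m], of b] m_def by auto
        qed
        then show False using ne sig_props(2)[OF cl mT ex[of m]] by simp
      qed
      obtain d where d: "d > 0" "\<forall>u\<in>T. m < u \<and> u < m + d \<longrightarrow> \<phi> m - (e/2) * (u - m) \<le> \<phi> u"
        using rd[OF mT sigm, of "e/2"] e by auto
      have "Inf B < m + d" using d m_def by simp
      then obtain b where bB: "b \<in> B" "b < m + d" using cInf_lessD[OF neB] by blast
      then have b: "b \<in> T" "m \<le> b" "b \<noteq> m" "\<phi> b + e*(b-s) < \<phi> s"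
        using mB cInf_lower[OF _ bddB] m_def by (auto simp: B_def)
      have "\<phi> m - (e/2) * (b - m) \<le> \<phi> b" using d(2) b bB by auto
      moreover have "e*(b-s) = e*(m-s) + e*(b-m)" by (simp add: algebra_simps)
      moreover have "e*(b-m) \<ge> 0" using b e by simp
      ultimately show False using False b(4) by linarith
    qed
  qed
  show ?thesis
  proof (rule ccontr)
    assume "\<not> ?thesis"
    then have gt: "\<phi> s > \<phi> r" by simp
    then have "r \<noteq> s" by auto
    then have rs': "r - s > 0" using sr by simp
    define e where "e = (\<phi> s - \<phi> r) / (2 * (r - s))"
    have e: "e > 0" using gt rs' by (simp add: e_def)
    have "e * (r - s) = (\<phi> s - \<phi> r) / 2" using rs' by (simp add: e_def field_simps)
    then show False using key[OF e] gt by simp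
  qed
qed

lemma dd_jump:
  assumes "has_delta_derivative T f D t" "t \<in> T"
  shows "f (ts_sigma T t) = f t + D * (ts_sigma T t - t)"
proof -
  let ?v = "\<bar>f (ts_sigma T t) - f t - D * (ts_sigma T t - t)\<bar>"
  have H: "?v \<le> e * \<bar>ts_sigma T t - t\<bar>" if "e > 0" for e
    using assms that unfolding has_delta_derivative_def by (metis abs_0 diff_self)
  then have "?v \<le> 0"
  proof (cases "ts_sigma T t - t = 0")
    case True then show ?thesis using \<open>\<And>e. e>0 \<Longrightarrow> _\<close>[of 1] by simp
  next
    case False
    show ?thesis
    proof (rule ccontr)
      assume "\<not> ?v \<le> 0"
      then have "?v > 0" by simp
      have pos: "?v / (2*\<bar>ts_sigma T t - t\<bar>) > 0" using \<open>?v > 0\<close> False by simp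
      have "?v \<le> (?v / (2*\<bar>ts_sigma T t - t\<bar>)) * \<bar>ts_sigma T t - t\<bar>"
        by (rule H[OF pos])
      also have "\<dots> = ?v / 2" using False by simp
      finally show False using \<open>?v > 0\<close> by simp
    qed
  qed
  then show ?thesis by simp
qed

lemma dd_cont:
  assumes d: "has_delta_derivative T f D t" and t: "t \<in> T"
  shows "(f \<longlongrightarrow> f t) (at t within T)"
proof (rule tendstoI)
  fix e :: real assume e: "e > 0"
  define mu where "mu = ts_sigma T t - t"
  have jump: "f (ts_sigma T t) = f t + D * mu" using dd_jump[OF d t] by (simp add: mu_def)
  define \<epsilon> where "\<epsilon> = e / (2 * (2 * \<bar>mu\<bar> + 1))"
  have eps: "\<epsilon> > 0" using e by (simp add: \<epsilon>_def add_pos_nonneg)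
  obtain \<delta> where del: "\<delta> > 0" "\<And>s. s \<in> T \<Longrightarrow> \<bar>s - t\<bar> < \<delta> \<Longrightarrow>
      \<bar>f (ts_sigma T t) - f s - D * (ts_sigma T t - s)\<bar> \<le> \<epsilon> * \<bar>ts_sigma T t - s\<bar>"
    using d eps unfolding has_delta_derivative_def by blast
  define \<delta>' where "\<delta>' = min \<delta> (min 1 (e / (2 * (\<bar>D\<bar> + 1))))"
  have d': "\<delta>' > 0" using del e by (simp add: \<delta>'_def)
  show "\<forall>\<^sub>F s in at t within T. dist (f s) (f t) < e"
    unfolding eventually_at
  proof (intro exI[of _ \<delta>'] conjI allI impI ballI)
    show "\<delta>' > 0" by fact
    fix s assume s: "s \<in> T" "s \<noteq> t \<and> dist s t < \<delta>'"
    have st: "\<bar>s - t\<bar> < \<delta>'" using s by (simp add: dist_real_def)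
    have h: "\<bar>f (ts_sigma T t) - f s - D * (ts_sigma T t - s)\<bar> \<le> \<epsilon> * \<bar>ts_sigma T t - s\<bar>"
      using del(2)[OF s(1)] st by (simp add: \<delta>'_def)
    have "f s - f t = D * (s - t) - (f (ts_sigma T t) - f s - D * (ts_sigma T t - s))"
      using jump by (simp add: mu_def algebra_simps)
    then have "\<bar>f s - f t\<bar> \<le> \<bar>D * (s - t)\<bar> + \<bar>f (ts_sigma T t) - f s - D * (ts_sigma T t - s)\<bar>"
      by (simp only: abs_triangle_ineq4)
    then have "\<bar>f s - f t\<bar> \<le> \<bar>D\<bar> * \<bar>s - t\<bar> + \<epsilon> * \<bar>ts_sigma T t - s\<bar>"
      using h by (simp add: abs_mult)
    also have "\<bar>ts_sigma T t - s\<bar> \<le> \<bar>mu\<bar> + \<bar>s - t\<bar>" by (simp add: mu_def)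
    then have "\<epsilon> * \<bar>ts_sigma T t - s\<bar> \<le> \<epsilon> * (\<bar>mu\<bar> + 1)"
      using st eps by (intro mult_left_mono) (auto simp: \<delta>'_def)
    also have "\<epsilon> * (\<bar>mu\<bar> + 1) \<le> e / 2"
      using e by (simp add: \<epsilon>_def field_simps)
    also have "\<bar>D\<bar> * \<bar>s - t\<bar> \<le> \<bar>D\<bar> * \<delta>'" using st by (intro mult_left_mono) auto
    also have "\<bar>D\<bar> * \<delta>' \<le> \<bar>D\<bar> * (e / (2 * (\<bar>D\<bar> + 1)))" by (intro mult_left_mono) (auto simp: \<delta>'_def)
    also have "\<dots> < e / 2" using e by (simp add: field_simps)
    finally show "dist (f s) (f t) < e" by (simp add: dist_real_def)
  qed
qed

lemma dd_rd:
  assumes d: "has_delta_derivative T f D t" and eq: "ts_sigma T t = t" and e: "e > 0"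
  shows "\<exists>d>0. \<forall>u\<in>T. \<bar>u - t\<bar> < d \<longrightarrow> \<bar>f u - f t - D * (u - t)\<bar> \<le> e * \<bar>u - t\<bar>"
proof -
  obtain \<delta> where del: "\<delta> > 0" "\<forall>s\<in>T. \<bar>s - t\<bar> < \<delta> \<longrightarrow>
      \<bar>f (ts_sigma T t) - f s - D * (ts_sigma T t - s)\<bar> \<le> e * \<bar>ts_sigma T t - s\<bar>"
    using d e unfolding has_delta_derivative_def by blast
  show ?thesis
  proof (intro exI[of _ \<delta>] conjI ballI impI)
    fix u assume "u \<in> T" "\<bar>u - t\<bar> < \<delta>"
    then have "\<bar>f t - f u - D * (t - u)\<bar> \<le> e * \<bar>t - u\<bar>" using del eq by auto
    then show "\<bar>f u - f t - D * (u - t)\<bar> \<le> e * \<bar>u - t\<bar>" by (simp add: abs_minus_commute algebra_simps)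
  qed (use del in auto)
qed

lemma dd_real_deriv:
  assumes d: "has_delta_derivative T f D t" and eq: "ts_sigma T t = t"
  shows "(f has_real_derivative D) (at t within T)"
  unfolding has_field_derivative_def has_derivative_within_alt
proof (intro conjI allI impI)
  show "bounded_linear ((*) D)" by (rule bounded_linear_mult_right)
  fix e :: real assume "e > 0"
  from dd_rd[OF d eq this] show "\<exists>d>0. \<forall>y\<in>T. norm (y - t) < d \<longrightarrow> norm (f y - f t - D * (y - t)) \<le> e * norm (y - t)"
    by simp
qed

lemma dd_add:
  assumes f: "has_delta_derivative T f D t" and g: "has_delta_derivative T g E t"
  shows "has_delta_derivative T (\<lambda>u. f u + g u) (D + E) t"
  unfolding has_delta_derivative_def
proof (intro allI impI)
  fix \<epsilon> :: real assume e: "\<epsilon> > 0"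
  obtain d1 where d1: "d1 > 0" "\<forall>s\<in>T. \<bar>s - t\<bar> < d1 \<longrightarrow>
      \<bar>f (ts_sigma T t) - f s - D * (ts_sigma T t - s)\<bar> \<le> (\<epsilon>/2) * \<bar>ts_sigma T t - s\<bar>"
    using f e unfolding has_delta_derivative_def by (meson half_gt_zero)
  obtain d2 where d2: "d2 > 0" "\<forall>s\<in>T. \<bar>s - t\<bar> < d2 \<longrightarrow>
      \<bar>g (ts_sigma T t) - g s - E * (ts_sigma T t - s)\<bar> \<le> (\<epsilon>/2) * \<bar>ts_sigma T t - s\<bar>"
    using g e unfolding has_delta_derivative_def by (meson half_gt_zero)
  show "\<exists>\<delta>>0. \<forall>s\<in>T. \<bar>s - t\<bar> < \<delta> \<longrightarrow>
      \<bar>f (ts_sigma T t) + g (ts_sigma T t) - (f s + g s) - (D + E) * (ts_sigma T t - s)\<bar> \<le> \<epsilon> * \<bar>ts_sigma T t - s\<bar>"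
  proof (intro exI[of _ "min d1 d2"] conjI ballI impI)
    fix s assume s: "s \<in> T" "\<bar>s - t\<bar> < min d1 d2"
    have "\<bar>f (ts_sigma T t) + g (ts_sigma T t) - (f s + g s) - (D + E) * (ts_sigma T t - s)\<bar>
       \<le> \<bar>f (ts_sigma T t) - f s - D * (ts_sigma T t - s)\<bar> + \<bar>g (ts_sigma T t) - g s - E * (ts_sigma T t - s)\<bar>"
      by (simp add: algebra_simps)
    also have "\<dots> \<le> (\<epsilon>/2) * \<bar>ts_sigma T t - s\<bar> + (\<epsilon>/2) * \<bar>ts_sigma T t - s\<bar>"
      using d1 d2 s by (intro add_mono) auto
    finally show "\<bar>f (ts_sigma T t) + g (ts_sigma T t) - (f s + g s) - (D + E) * (ts_sigma T t - s)\<bar> \<le> \<epsilon> * \<bar>ts_sigma T t - s\<bar>"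
      by simp
  qed (use d1 d2 in auto)
qed

lemma dd_cmult:
  assumes f: "has_delta_derivative T f D t"
  shows "has_delta_derivative T (\<lambda>u. k * f u) (k * D) t"
  unfolding has_delta_derivative_def
proof (intro allI impI)
  fix \<epsilon> :: real assume e: "\<epsilon> > 0"
  have e': "\<epsilon> / (\<bar>k\<bar> + 1) > 0" using e by simp
  obtain d1 where d1: "d1 > 0" "\<forall>s\<in>T. \<bar>s - t\<bar> < d1 \<longrightarrow>
      \<bar>f (ts_sigma T t) - f s - D * (ts_sigma T t - s)\<bar> \<le> (\<epsilon> / (\<bar>k\<bar> + 1)) * \<bar>ts_sigma T t - s\<bar>"
    using f e' unfolding has_delta_derivative_def by blast
  show "\<exists>\<delta>>0. \<forall>s\<in>T. \<bar>s - t\<bar> < \<delta> \<longrightarrow>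
      \<bar>k * f (ts_sigma T t) - k * f s - k * D * (ts_sigma T t - s)\<bar> \<le> \<epsilon> * \<bar>ts_sigma T t - s\<bar>"
  proof (intro exI[of _ d1] conjI ballI impI)
    fix s assume s: "s \<in> T" "\<bar>s - t\<bar> < d1"
    have "\<bar>k * f (ts_sigma T t) - k * f s - k * D * (ts_sigma T t - s)\<bar>
        = \<bar>k\<bar> * \<bar>f (ts_sigma T t) - f s - D * (ts_sigma T t - s)\<bar>"
      by (simp add: abs_mult[symmetric] algebra_simps)
    also have "\<dots> \<le> \<bar>k\<bar> * ((\<epsilon> / (\<bar>k\<bar> + 1)) * \<bar>ts_sigma T t - s\<bar>)"
      using d1 s by (intro mult_left_mono) auto
    also have "\<dots> \<le> \<epsilon> * \<bar>ts_sigma T t - s\<bar>"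
    proof -
      have "\<bar>k\<bar> * (\<epsilon> / (\<bar>k\<bar> + 1)) \<le> \<epsilon>" using e by (simp add: field_simps)
      then show ?thesis by (metis abs_ge_zero mult.assoc mult_right_mono)
    qed
    finally show "\<bar>k * f (ts_sigma T t) - k * f s - k * D * (ts_sigma T t - s)\<bar> \<le> \<epsilon> * \<bar>ts_sigma T t - s\<bar>" .
  qed (use d1 in auto)
qed

lemma ts_mono_deriv:
  assumes cl: "closed T" and unb: "\<forall>r. \<exists>t\<in>T. t > r" and s: "s \<in> T" and r: "r \<in> T" and sr: "s \<le> r"
    and d: "\<And>t. t \<in> T \<Longrightarrow> has_delta_derivative T f (D t) t"
    and nn: "\<And>t. t \<in> T \<Longrightarrow> D t \<ge> 0"
  shows "f s \<le> f r"
proof (rule ts_mono_gen[OF cl unb s r sr])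
  show "(f \<longlongrightarrow> f t) (at t within T)" if "t \<in> T" for t using dd_cont[OF d[OF that] that] .
  show "f t \<le> f (ts_sigma T t)" if "t \<in> T" "t < ts_sigma T t" for t
    using dd_jump[OF d[OF that(1)] that(1)] nn[OF that(1)] that(2) by simp
  show "\<exists>d>0. \<forall>u\<in>T. t < u \<and> u < t + d \<longrightarrow> f t - e * (u - t) \<le> f u"
    if tT: "t \<in> T" and tS: "ts_sigma T t = t" and e: "e > 0" for t e
  proof -
    obtain dd where dd: "dd > 0" "\<forall>u\<in>T. \<bar>u - t\<bar> < dd \<longrightarrow> \<bar>f u - f t - D t * (u - t)\<bar> \<le> e * \<bar>u - t\<bar>"
      using dd_rd[OF d[OF tT] tS e] by blast
    show ?thesis
    proof (intro exI[of _ dd] conjI ballI impI)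
      fix u assume u: "u \<in> T" "t < u \<and> u < t + dd"
      then have "\<bar>f u - f t - D t * (u - t)\<bar> \<le> e * (u - t)" using dd by auto
      moreover have "D t * (u - t) \<ge> 0" using nn[OF tT] u by simp
      ultimately show "f t - e * (u - t) \<le> f u" by linarith
    qed (use dd in auto)
  qed
qed

lemma ts_antimono_deriv:
  assumes cl: "closed T" and unb: "\<forall>r. \<exists>t\<in>T. t > r" and s: "s \<in> T" and r: "r \<in> T" and sr: "s \<le> r"
    and d: "\<And>t. t \<in> T \<Longrightarrow> has_delta_derivative T f (D t) t"
    and np: "\<And>t. t \<in> T \<Longrightarrow> D t \<le> 0"
  shows "f r \<le> f s"
proof -
  have dm: "has_delta_derivative T (\<lambda>u. - f u) (- D t) t" if "t \<in> T" for t
    using dd_cmult[OF d[OF that], of "-1"] by simp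
  have "- f s \<le> - f r"
    by (rule ts_mono_deriv[OF cl unb s r sr, of "\<lambda>u. - f u" "\<lambda>t. - D t"]) (use dm np in auto)
  then show ?thesis by simp
qed

lemma rho_ld:
  assumes t: "t \<in> T" and dense: "\<forall>d>0. \<exists>s\<in>T. t - d < s \<and> s < t"
  shows "ts_rho T t = t" "\<exists>s\<in>T. s < t"
proof -
  let ?S = "{s\<in>T. s < t}"
  have ne: "?S \<noteq> {}" using dense[rule_format, of 1] by auto
  then show "\<exists>s\<in>T. s < t" by auto
  have bdd: "bdd_above ?S" by (rule bdd_aboveI[of _ t]) auto
  have "Sup ?S = t"
  proof (rule antisym)
    show "Sup ?S \<le> t" by (rule cSup_least[OF ne]) auto
    show "t \<le> Sup ?S"
    proof (rule ccontr)
      assume "\<not> t \<le> Sup ?S"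
      then obtain s where "s \<in> T" "t - (t - Sup ?S) < s" "s < t" using dense[rule_format, of "t - Sup ?S"] by auto
      moreover have "s \<le> Sup ?S" using \<open>s\<in>T\<close> \<open>s<t\<close> by (intro cSup_upper[OF _ bdd]) auto
      ultimately show False by simp
    qed
  qed
  then show "ts_rho T t = t" unfolding ts_rho_def if_not_P[OF ne] .
qed

lemma local_bound:
  fixes f :: "real \<Rightarrow> real"
  assumes cl: "closed T" and unb: "\<forall>r. \<exists>t\<in>T. t > r" and rd: "rd_continuous T f" and t: "t \<in> T"
  shows "\<exists>\<delta>>0. \<exists>B. \<forall>u\<in>T. \<bar>u - t\<bar> < \<delta> \<longrightarrow> \<bar>f u\<bar> \<le> B"
proof -
  have ex: "\<exists>s\<in>T. s > t" using unb by auto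
  obtain d1 B1 where d1: "d1 > 0" "\<forall>u\<in>T. t \<le> u \<and> u < t + d1 \<longrightarrow> \<bar>f u\<bar> \<le> B1"
  proof (cases "ts_sigma T t = t")
    case True
    then have "continuous (at t within T) f" using rd t by (simp add: rd_continuous_def)
    then obtain d where d: "d > 0" "\<forall>u\<in>T. dist u t < d \<longrightarrow> dist (f u) (f t) < 1"
      unfolding continuous_within_eps_delta by (meson zero_less_one)
    show ?thesis
    proof (rule that[of d "\<bar>f t\<bar> + 1"])
      show "\<forall>u\<in>T. t \<le> u \<and> u < t + d \<longrightarrow> \<bar>f u\<bar> \<le> \<bar>f t\<bar> + 1"
        using d by (auto simp: dist_real_def)
    qed (use d in auto)
  next
    case False
    then have gt: "ts_sigma T t > t" using sig_props(2)[OF cl t ex] by simp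
    show ?thesis
    proof (rule that[of "ts_sigma T t - t" "\<bar>f t\<bar>"])
      show "\<forall>u\<in>T. t \<le> u \<and> u < t + (ts_sigma T t - t) \<longrightarrow> \<bar>f u\<bar> \<le> \<bar>f t\<bar>"
      proof (intro ballI impI)
        fix u assume u: "u \<in> T" "t \<le> u \<and> u < t + (ts_sigma T t - t)"
        have "u = t"
        proof (rule ccontr)
          assume "u \<noteq> t"
          then show False using sig_gap[OF cl t ex u(1)] u by auto
        qed
        then show "\<bar>f u\<bar> \<le> \<bar>f t\<bar>" by simp
      qed
    qed (use gt in auto)
  qed
  obtain d2 B2 where d2: "d2 > 0" "\<forall>u\<in>T. t - d2 < u \<and> u < t \<longrightarrow> \<bar>f u\<bar> \<le> B2"
  proof (cases "\<forall>d>0. \<exists>s\<in>T. t - d < s \<and> s < t")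
    case True
    note r = rho_ld[OF t True]
    then obtain L where L: "(f \<longlongrightarrow> L) (at t within (T \<inter> {..<t}))"
      using rd t unfolding rd_continuous_def by blast
    then have "\<forall>\<^sub>F u in at t within (T \<inter> {..<t}). dist (f u) L < 1" by (simp add: tendsto_iff)
    then obtain d where d: "d > 0" "\<And>u. u \<in> T \<inter> {..<t} \<Longrightarrow> u \<noteq> t \<Longrightarrow> dist u t < d \<Longrightarrow> dist (f u) L < 1"
      unfolding eventually_at by blast
    show ?thesis
    proof (rule that[of d "\<bar>L\<bar> + 1"])
      show "\<forall>u\<in>T. t - d < u \<and> u < t \<longrightarrow> \<bar>f u\<bar> \<le> \<bar>L\<bar> + 1"
      proof (intro ballI impI)
        fix u assume u: "u \<in> T" "t - d < u \<and> u < t"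
        then have "dist (f u) L < 1" using d(2)[of u] by (auto simp: dist_real_def)
        then show "\<bar>f u\<bar> \<le> \<bar>L\<bar> + 1" by (auto simp: dist_real_def)
      qed
    qed (use d in auto)
  next
    case False
    then obtain d where d: "d > 0" "\<forall>s\<in>T. \<not> (t - d < s \<and> s < t)" by blast
    show ?thesis by (rule that[of d 0]) (use d in auto)
  qed
  have H: "\<forall>u\<in>T. \<bar>u - t\<bar> < min d1 d2 \<longrightarrow> \<bar>f u\<bar> \<le> max B1 B2"
  proof (intro ballI impI)
    fix u assume u: "u \<in> T" "\<bar>u - t\<bar> < min d1 d2"
    show "\<bar>f u\<bar> \<le> max B1 B2"
    proof (cases "t \<le> u")
      case True
      then have "u < t + d1" using u(2) by (simp add: abs_less_iff)
      then have "\<bar>f u\<bar> \<le> B1" using d1(2) u(1) True by blast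
      then show ?thesis by simp
    next
      case False
      then have "t - d2 < u" "u < t" using u(2) by (auto simp: abs_less_iff)
      then have "\<bar>f u\<bar> \<le> B2" using d2(2) u(1) by blast
      then show ?thesis by simp
    qed
  qed
  have pos: "0 < min d1 d2" using d1 d2 by simp
  show ?thesis using H pos by blast
qed

lemma compact_bound:
  fixes f :: "real \<Rightarrow> real"
  assumes cl: "closed T" and unb: "\<forall>r. \<exists>t\<in>T. t > r" and rd: "rd_continuous T f"
  shows "\<exists>B. \<forall>s\<in>T. p \<le> s \<and> s \<le> q \<longrightarrow> \<bar>f s\<bar> \<le> B"
proof (rule ccontr)
  let ?K = "T \<inter> {p..q}"
  have K: "compact ?K" using cl by (simp add: closed_Int_compact)
  assume "\<not> ?thesis"
  then have "\<forall>n::nat. \<exists>s. s \<in> ?K \<and> \<bar>f s\<bar> > real n" by (auto simp: not_le)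
  then obtain sq where sq: "\<And>n. sq n \<in> ?K" "\<And>n. \<bar>f (sq n)\<bar> > real n" by metis
  obtain l r where lr: "l \<in> ?K" "strict_mono r" "(sq \<circ> r) \<longlonglongrightarrow> l"
    using seq_compactE[OF compact_imp_seq_compact[OF K], of sq] sq(1) by blast
  obtain \<delta> B where dB: "\<delta> > 0" "\<forall>u\<in>T. \<bar>u - l\<bar> < \<delta> \<longrightarrow> \<bar>f u\<bar> \<le> B"
    using local_bound[OF cl unb rd, of l] lr(1) by blast
  have "\<forall>\<^sub>F n in sequentially. dist ((sq \<circ> r) n) l < \<delta>" using lr(3) dB(1) by (simp add: tendsto_iff)
  then obtain N where N: "\<And>n. n \<ge> N \<Longrightarrow> dist (sq (r n)) l < \<delta>" by (auto simp: eventually_sequentially)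
  obtain n :: nat where n0: "real n \<ge> max B (real N)" using real_arch_simple by blast
  then have n: "n \<ge> N" "real n \<ge> B" by auto
  have "\<bar>f (sq (r n))\<bar> \<le> B" using dB(2) N[OF n(1)] sq(1)[of "r n"] by (auto simp: dist_real_def)
  moreover have "\<bar>f (sq (r n))\<bar> > real (r n)" by (rule sq(2))
  moreover have "real n \<le> real (r n)" using seq_suble[OF lr(2)] by simp
  ultimately show False using n by linarith
qed

lemma countable_RI:
  fixes T :: "real set"
  shows "countable {t\<in>T. \<exists>\<delta>>0. \<forall>s\<in>T. \<not> (t < s \<and> s < t + \<delta>)}" (is "countable ?R")
proof -
  have "\<forall>t\<in>?R. \<exists>q. q \<in> \<rat> \<and> t < q \<and> (\<forall>s\<in>T. \<not> (t < s \<and> s \<le> q))"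
  proof
    fix t assume "t \<in> ?R"
    then obtain \<delta> where d: "\<delta> > 0" "\<forall>s\<in>T. \<not> (t < s \<and> s < t + \<delta>)" by auto
    obtain q where "q \<in> \<rat>" "t < q" "q < t + \<delta>" using Rats_dense_in_real[of t "t + \<delta>"] d(1) by auto
    then show "\<exists>q. q \<in> \<rat> \<and> t < q \<and> (\<forall>s\<in>T. \<not> (t < s \<and> s \<le> q))" using d(2) by force
  qed
  from bchoice[OF this] obtain Q where Q0: "\<forall>t\<in>?R. Q t \<in> \<rat> \<and> t < Q t \<and> (\<forall>s\<in>T. \<not> (t < s \<and> s \<le> Q t))"
    by blast
  then have Q: "\<And>t. t \<in> ?R \<Longrightarrow> Q t \<in> \<rat> \<and> t < Q t \<and> (\<forall>s\<in>T. \<not> (t < s \<and> s \<le> Q t))"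
    by blast
  have inj: "inj_on Q ?R"
  proof (rule inj_onI)
    fix a b assume a: "a \<in> ?R" and b: "b \<in> ?R" and eq: "Q a = Q b"
    show "a = b"
    proof (rule ccontr)
      assume "a \<noteq> b"
      then consider "a < b" | "b < a" by linarith
      then show False
      proof cases
        case 1
        have "b \<in> T" using b by simp
        then have "\<not> (a < b \<and> b \<le> Q a)" using Q[OF a] by blast
        then show False using 1 Q[OF b] eq by simp
      next
        case 2
        have "a \<in> T" using a by simp
        then have "\<not> (b < a \<and> a \<le> Q b)" using Q[OF b] by blast
        then show False using 2 Q[OF a] eq by simp
      qed
    qed
  qed
  have "Q ` ?R \<subseteq> \<rat>" using Q by auto
  then have "countable (Q ` ?R)" using countable_rat countable_subset by blast
  then show ?thesis using countable_image_inj_on inj by blast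
qed

lemma countable_LI:
  fixes T :: "real set"
  shows "countable {t\<in>T. \<exists>\<delta>>0. \<forall>s\<in>T. \<not> (t - \<delta> < s \<and> s < t)}" (is "countable ?L")
proof -
  have eq: "?L = uminus ` {t\<in>uminus ` T. \<exists>\<delta>>0. \<forall>s\<in>uminus ` T. \<not> (t < s \<and> s < t + \<delta>)}"
  proof (rule set_eqI, rule iffI)
    fix x assume "x \<in> ?L"
    then show "x \<in> uminus ` {t\<in>uminus ` T. \<exists>\<delta>>0. \<forall>s\<in>uminus ` T. \<not> (t < s \<and> s < t + \<delta>)}"
    proof -
      from \<open>x \<in> ?L\<close> obtain \<delta> where x: "x \<in> T" "\<delta> > 0" "\<forall>s\<in>T. \<not> (x - \<delta> < s \<and> s < x)" by blast
      have "\<forall>s\<in>uminus ` T. \<not> (-x < s \<and> s < -x + \<delta>)"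
      proof
        fix s assume "s \<in> uminus ` T"
        then obtain s' where "s' \<in> T" "s = - s'" by blast
        then show "\<not> (-x < s \<and> s < -x + \<delta>)" using x(3) by force
      qed
      then have "-x \<in> {t\<in>uminus ` T. \<exists>\<delta>>0. \<forall>s\<in>uminus ` T. \<not> (t < s \<and> s < t + \<delta>)}"
        using x(1,2) by blast
      then show ?thesis by (rule rev_image_eqI) simp
    qed
  next
    fix x assume "x \<in> uminus ` {t\<in>uminus ` T. \<exists>\<delta>>0. \<forall>s\<in>uminus ` T. \<not> (t < s \<and> s < t + \<delta>)}"
    then obtain y where y: "x = - y" "y \<in> uminus ` T" "\<exists>\<delta>>0. \<forall>s\<in>uminus ` T. \<not> (y < s \<and> s < y + \<delta>)" by blast
    then obtain \<delta> where "\<delta> > 0" "\<forall>s\<in>uminus ` T. \<not> (y < s \<and> s < y + \<delta>)" by blast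
    then have "\<forall>s\<in>T. \<not> (x - \<delta> < s \<and> s < x)" using y(1) by force
    then show "x \<in> ?L" using y \<open>\<delta>>0\<close> by auto
  qed
  show ?thesis unfolding eq by (rule countable_image) (rule countable_RI)
qed

definition gT :: "real set \<Rightarrow> real \<Rightarrow> real" where
  "gT T r = Sup {s\<in>T. s \<le> r}"

lemma g_props:
  assumes cl: "closed T" and s0: "s0 \<in> T" "s0 \<le> r"
  shows "gT T r \<in> T" "gT T r \<le> r" "\<And>s. s \<in> T \<Longrightarrow> s \<le> r \<Longrightarrow> s \<le> gT T r"
proof -
  let ?S = "{s\<in>T. s \<le> r}"
  have ne: "?S \<noteq> {}" using s0 by auto
  have bdd: "bdd_above ?S" by (rule bdd_aboveI[of _ r]) auto
  show "gT T r \<le> r" unfolding gT_def by (rule cSup_least[OF ne]) auto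
  show "\<And>s. s \<in> T \<Longrightarrow> s \<le> r \<Longrightarrow> s \<le> gT T r" unfolding gT_def by (rule cSup_upper[OF _ bdd]) auto
  have "Sup ?S \<in> closure ?S" by (rule closure_contains_Sup[OF ne bdd])
  also have "closure ?S \<subseteq> T" using cl by (intro closure_minimal) auto
  finally show "gT T r \<in> T" unfolding gT_def .
qed

lemma g_id: assumes cl: "closed T" and t: "t \<in> T" shows "gT T t = t"
  using g_props[OF cl t order_refl] t by (meson order_antisym order_refl)

lemma g_between:
  assumes cl: "closed T" and s: "s \<in> T" "s \<le> r"
  shows "s \<le> gT T r" "gT T r \<le> r" "gT T r \<in> T"
  using g_props[OF cl s] s by auto

definition DD :: "real set \<Rightarrow> real set" where
  "DD T = {t\<in>T. \<exists>\<delta>>0. \<forall>s\<in>T. \<not> (t < s \<and> s < t + \<delta>)} \<union> {t\<in>T. \<exists>\<delta>>0. \<forall>s\<in>T. \<not> (t - \<delta> < s \<and> s < t)}"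

lemma DD_countable: "countable (DD T)"
  unfolding DD_def using countable_RI countable_LI by blast

lemma DD_negligible: "negligible (DD T)"
proof -
  have "DD T = \<Union> ((\<lambda>x. {x}) ` DD T)" by blast
  also have "negligible \<dots>" using DD_countable by (intro negligible_countable_Union) auto
  finally show ?thesis .
qed

lemma g_cont:
  fixes f :: "real \<Rightarrow> real"
  assumes cl: "closed T" and unb: "\<forall>r. \<exists>t\<in>T. t > r" and rd: "rd_continuous T f"
    and s0: "s0 \<in> T" "s0 \<le> r" and rD: "r \<notin> DD T"
  shows "isCont (\<lambda>r. f (gT T r)) r"
proof (cases "r \<in> T")
  case False
  then have "r \<in> - T" by simp
  moreover have "open (- T)" using cl by auto
  ultimately obtain e where e: "e > 0" "ball r e \<subseteq> - T" by (meson open_contains_ball)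
  have sr: "s0 < r" using s0 False by (cases "s0 = r") auto
  define e' where "e' = min e (r - s0)"
  have e': "e' > 0" using e sr by (simp add: e'_def)
  have eq: "gT T r' = gT T r" if "dist r' r < e'" for r'
  proof -
    have "{s\<in>T. s \<le> r'} = {s\<in>T. s \<le> r}"
    proof (intro set_eqI iffI)
      fix s assume s: "s \<in> {s\<in>T. s \<le> r'}"
      show "s \<in> {s\<in>T. s \<le> r}"
      proof (rule ccontr)
        assume "s \<notin> {s\<in>T. s \<le> r}"
        then have "r < s" using s by auto
        then have "s \<in> ball r e" using s that by (auto simp: dist_real_def e'_def)
        then show False using e(2) s by blast
      qed
    next
      fix s assume s: "s \<in> {s\<in>T. s \<le> r}"
      show "s \<in> {s\<in>T. s \<le> r'}"
      proof (rule ccontr)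
        assume "s \<notin> {s\<in>T. s \<le> r'}"
        then have "r' < s" using s by auto
        then have "s \<in> ball r e" using s that by (auto simp: dist_real_def e'_def)
        then show False using e(2) s by blast
      qed
    qed
    then show ?thesis by (simp add: gT_def)
  qed
  show ?thesis unfolding continuous_at_eps_delta
  proof (intro allI impI)
    fix \<epsilon> :: real assume "\<epsilon> > 0"
    have "\<forall>x'. dist x' r < e' \<longrightarrow> dist (f (gT T x')) (f (gT T r)) < \<epsilon>"
    proof (intro allI impI)
      fix x' assume "dist x' r < e'"
      then have "gT T x' = gT T r" by (rule eq)
      then show "dist (f (gT T x')) (f (gT T r)) < \<epsilon>" using \<open>\<epsilon> > 0\<close> by simp
    qed
    then show "\<exists>\<delta>>0. \<forall>x'. dist x' r < \<delta> \<longrightarrow> dist (f (gT T x')) (f (gT T r)) < \<epsilon>"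
      using e' by blast
  qed
next
  case True
  have nRI: "\<forall>d>0. \<exists>s\<in>T. r < s \<and> s < r + d"
  proof (intro allI impI, rule ccontr)
    fix d :: real assume "d > 0" "\<not> (\<exists>s\<in>T. r < s \<and> s < r + d)"
    then have "r \<in> DD T" using True unfolding DD_def by blast
    with rD show False by simp
  qed
  have nLI: "\<forall>d>0. \<exists>s\<in>T. r - d < s \<and> s < r"
  proof (intro allI impI, rule ccontr)
    fix d :: real assume "d > 0" "\<not> (\<exists>s\<in>T. r - d < s \<and> s < r)"
    then have "r \<in> DD T" using True unfolding DD_def by blast
    with rD show False by simp
  qed
  have "ts_sigma T r = r" by (rule sig_rd2[OF True nRI])
  then have cont: "continuous (at r within T) f" using rd True by (simp add: rd_continuous_def)
  have gr: "gT T r = r" by (rule g_id[OF cl True])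
  show ?thesis unfolding continuous_at_eps_delta
  proof (intro allI impI)
    fix \<epsilon> :: real assume e: "\<epsilon> > 0"
    obtain d0 where d0: "d0 > 0" "\<forall>x'\<in>T. dist x' r < d0 \<longrightarrow> dist (f x') (f r) < \<epsilon>"
      using cont e unfolding continuous_within_eps_delta by blast
    obtain s1 where s1: "s1 \<in> T" "r - d0 < s1" "s1 < r" using nLI d0(1) by blast
    show "\<exists>\<delta>>0. \<forall>x'. dist x' r < \<delta> \<longrightarrow> dist (f (gT T x')) (f (gT T r)) < \<epsilon>"
    proof (intro exI[of _ "r - s1"] conjI allI impI)
      show "r - s1 > 0" using s1 by simp
      fix x' assume x': "dist x' r < r - s1"
      have "s1 \<le> x'" using x' by (auto simp: dist_real_def)
      note gb = g_between[OF cl s1(1) this]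
      have "dist (gT T x') r < d0"
      proof (cases "r \<le> x'")
        case True
        note gb2 = g_between[OF cl \<open>r \<in> T\<close> True]
        then show ?thesis using x' s1 by (auto simp: dist_real_def)
      next
        case False
        then show ?thesis using gb s1 by (auto simp: dist_real_def)
      qed
      then show "dist (f (gT T x')) (f (gT T r)) < \<epsilon>" using d0(2) gb(3) gr by auto
    qed
  qed
qed

lemma g_integrable:
  fixes f :: "real \<Rightarrow> real"
  assumes cl: "closed T" and unb: "\<forall>r. \<exists>t\<in>T. t > r" and rd: "rd_continuous T f"
    and p: "p \<in> T" and pq: "p \<le> q"
  shows "(\<lambda>r. f (gT T r)) integrable_on {p..q}"
proof -
  let ?h = "\<lambda>r. f (gT T r)"
  let ?S = "{p..q} - DD T"
  obtain B where B: "\<forall>s\<in>T. p \<le> s \<and> s \<le> q \<longrightarrow> \<bar>f s\<bar> \<le> B"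
    using compact_bound[OF cl unb rd] by blast
  have cont: "continuous_on ?S ?h"
  proof (rule continuous_at_imp_continuous_on, intro ballI)
    fix x assume "x \<in> ?S"
    then have "p \<le> x" "x \<notin> DD T" by auto
    then show "isCont ?h x" by (rule g_cont[OF cl unb rd p])
  qed
  have Dl: "DD T \<in> sets lebesgue" by (rule negligible_imp_sets[OF DD_negligible])
  have Il: "{p..q} \<in> sets lebesgue" by simp
  have Sleb: "?S \<in> sets lebesgue" using Il Dl by (rule sets.Diff)
  have Slm: "?S \<in> lmeasurable"
  proof (rule bounded_set_imp_lmeasurable[OF _ Sleb])
    show "bounded ?S" by (rule bounded_subset[OF bounded_closed_interval[of p q]]) auto
  qed
  have "?h integrable_on ?S"
  proof (rule measurable_bounded_by_integrable_imp_integrable_real)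
    show "?h \<in> borel_measurable (lebesgue_on ?S)" by (rule continuous_imp_measurable_on_sets_lebesgue[OF cont Sleb])
    show "(\<lambda>x. B) integrable_on ?S" by (rule integrable_on_const[OF Slm])
    show "\<bar>?h x\<bar> \<le> B" if "x \<in> ?S" for x
    proof -
      have "p \<le> x" "x \<le> q" using that by auto
      note gb = g_between[OF cl p \<open>p \<le> x\<close>]
      have "gT T x \<le> q" using gb(2) \<open>x \<le> q\<close> by linarith
      then show ?thesis using B gb(1,3) by blast
    qed
    show "?S \<in> sets lebesgue" by (rule Sleb)
  qed
  then show ?thesis
  proof (rule integrable_spike_set)
    show "negligible {x \<in> ?S - {p..q}. ?h x \<noteq> 0}" by (rule negligible_subset[OF negligible_empty]) auto
    show "negligible {x \<in> {p..q} - ?S. ?h x \<noteq> 0}"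
      by (rule negligible_subset[OF DD_negligible]) auto
  qed
qed

lemma int_dev_bound:
  fixes h :: "real \<Rightarrow> real"
  assumes ab: "a \<le> b" and hi: "h integrable_on {a..b}" and hb: "\<And>r. r \<in> {a..b} \<Longrightarrow> \<bar>h r - c\<bar> \<le> K"
  shows "\<bar>integral {a..b} h - c * (b - a)\<bar> \<le> K * (b - a)"
proof -
  have hb1: "h r \<le> c + K" if "r \<in> {a..b}" for r using hb[OF that] by (simp add: abs_le_iff)
  have hb2: "c - K \<le> h r" if "r \<in> {a..b}" for r using hb[OF that] by (simp add: abs_le_iff)
  have i1: "integral {a..b} h \<le> integral {a..b} (\<lambda>_. c + K)"
    by (rule integral_le[OF hi]) (use hb1 in auto)
  have i2: "integral {a..b} (\<lambda>_. c - K) \<le> integral {a..b} h"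
    by (rule integral_le[OF _ hi]) (use hb2 in auto)
  have e1: "integral {a..b} (\<lambda>_. c + K) = (c + K) * (b - a)" using ab by simp
  have e2: "integral {a..b} (\<lambda>_. c - K) = (c - K) * (b - a)" using ab by simp
  show ?thesis using i1 i2 e1 e2 by (simp add: abs_le_iff algebra_simps)
qed

lemma antideriv_exists:
  fixes f :: "real \<Rightarrow> real"
  assumes cl: "closed T" and unb: "\<forall>r. \<exists>t\<in>T. t > r" and rd: "rd_continuous T f"
  shows "\<exists>F. \<forall>t\<in>T. has_delta_derivative T F (f t) t"
proof -
  obtain t0 where t0: "t0 \<in> T" using unb by blast
  have ex: "\<exists>s\<in>T. s > t" for t using unb by auto
  define h where "h = (\<lambda>r. f (gT T r))"
  define F where "F = (\<lambda>t. if t0 \<le> t then integral {t0..t} h else - integral {t..t0} h)"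
  have int: "h integrable_on {p..q}" if "p \<in> T" "p \<le> q" for p q
    unfolding h_def by (rule g_integrable[OF cl unb rd that])
  have diff: "F q - F p = integral {p..q} h" if p: "p \<in> T" and pq: "p \<le> q" for p q
  proof (cases "t0 \<le> p")
    case True
    have "integral {t0..p} h + integral {p..q} h = integral {t0..q} h"
      by (rule Henstock_Kurzweil_Integration.integral_combine[OF True pq int[OF t0]]) (use True pq in simp)
    then show ?thesis using True pq by (simp add: F_def)
  next
    case False
    show ?thesis
    proof (cases "t0 \<le> q")
      case True
      have "integral {p..t0} h + integral {t0..q} h = integral {p..q} h"
        by (rule Henstock_Kurzweil_Integration.integral_combine[OF _ True int[OF p pq]]) (use False in simp)
      then show ?thesis using True False by (simp add: F_def)
    next
      case False2: False
      have "integral {p..q} h + integral {q..t0} h = integral {p..t0} h"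
        by (rule Henstock_Kurzweil_Integration.integral_combine[OF pq _ int[OF p]]) (use False2 False in simp_all)
      then show ?thesis using False False2 by (simp add: F_def)
    qed
  qed
  have "has_delta_derivative T F (f t) t" if t: "t \<in> T" for t
    unfolding has_delta_derivative_def
  proof (intro allI impI)
    fix \<epsilon> :: real assume e: "\<epsilon> > 0"
    show "\<exists>\<delta>>0. \<forall>s\<in>T. \<bar>s - t\<bar> < \<delta> \<longrightarrow>
        \<bar>F (ts_sigma T t) - F s - f t * (ts_sigma T t - s)\<bar> \<le> \<epsilon> * \<bar>ts_sigma T t - s\<bar>"
    proof (cases "ts_sigma T t = t")
      case True
      then have "continuous (at t within T) f" using rd t by (simp add: rd_continuous_def)
      then obtain d0 where d0: "d0 > 0" "\<forall>u\<in>T. dist u t < d0 \<longrightarrow> dist (f u) (f t) < \<epsilon>"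
        using e unfolding continuous_within_eps_delta by blast
      show ?thesis
      proof (intro exI[of _ d0] conjI ballI impI)
        show "d0 > 0" by fact
        fix s assume s: "s \<in> T" "\<bar>s - t\<bar> < d0"
        show "\<bar>F (ts_sigma T t) - F s - f t * (ts_sigma T t - s)\<bar> \<le> \<epsilon> * \<bar>ts_sigma T t - s\<bar>"
        proof (cases "s \<le> t")
          case st: True
          have b: "\<bar>integral {s..t} h - f t * (t - s)\<bar> \<le> \<epsilon> * (t - s)"
          proof (rule int_dev_bound[OF st int[OF s(1) st]])
            fix r assume r: "r \<in> {s..t}"
            note gb = g_between[OF cl s(1), of r]
            have "dist (gT T r) t < d0" using gb r s(2) by (auto simp: dist_real_def)
            then have "dist (f (gT T r)) (f t) < \<epsilon>" using d0(2) gb r by auto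
            then show "\<bar>h r - f t\<bar> \<le> \<epsilon>" by (simp add: h_def dist_real_def)
          qed
          have "F t - F s = integral {s..t} h" by (rule diff[OF s(1) st])
          then show ?thesis using b True st by simp
        next
          case ts: False
          then have ts': "t \<le> s" by simp
          have b: "\<bar>integral {t..s} h - f t * (s - t)\<bar> \<le> \<epsilon> * (s - t)"
          proof (rule int_dev_bound[OF ts' int[OF t ts']])
            fix r assume r: "r \<in> {t..s}"
            note gb = g_between[OF cl t, of r]
            have "dist (gT T r) t < d0" using gb r s(2) by (auto simp: dist_real_def)
            then have "dist (f (gT T r)) (f t) < \<epsilon>" using d0(2) gb r by auto
            then show "\<bar>h r - f t\<bar> \<le> \<epsilon>" by (simp add: h_def dist_real_def)
          qed
          have "F s - F t = integral {t..s} h" by (rule diff[OF t ts'])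
          moreover have "\<bar>F t - F s - f t * (t - s)\<bar> = \<bar>(F s - F t) - f t * (s - t)\<bar>"
            by (simp add: abs_minus_commute algebra_simps)
          ultimately show ?thesis using b True ts' by simp
        qed
      qed
    next
      case False
      define sg where "sg = ts_sigma T t"
      have sgT: "sg \<in> T" using sig_props(1)[OF cl t ex] by (simp add: sg_def)
      have sgt: "sg > t" using sig_props(2)[OF cl t ex] False by (simp add: sg_def)
      define mu where "mu = sg - t"
      have mu: "mu > 0" using sgt by (simp add: mu_def)
      obtain d1 B where dB: "d1 > 0" "\<forall>u\<in>T. \<bar>u - t\<bar> < d1 \<longrightarrow> \<bar>f u\<bar> \<le> B"
        using local_bound[OF cl unb rd t] by blast
      define K where "K = B + \<bar>f t\<bar>"
      have K0: "K \<ge> 0" using dB t by (force simp: K_def)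
      define \<delta> where "\<delta> = min d1 (min mu (\<epsilon> * mu / (K + 1)))"
      have dpos: "\<delta> > 0" using dB mu e K0 by (simp add: \<delta>_def)
      show ?thesis unfolding sg_def[symmetric]
      proof (intro exI[of _ \<delta>] conjI ballI impI)
        show "\<delta> > 0" by fact
        fix s assume s: "s \<in> T" "\<bar>s - t\<bar> < \<delta>"
        have st: "s \<le> t"
        proof (rule ccontr)
          assume "\<not> s \<le> t"
          then have "t < s" "s < sg" using s(2) by (auto simp: \<delta>_def mu_def abs_less_iff)
          then show False using sig_gap[OF cl t ex s(1)] by (simp add: sg_def)
        qed
        have ssg: "s \<le> sg" using st sgt by simp
        have c1: "F sg - F s = integral {s..sg} h" by (rule diff[OF s(1) ssg])
        have c2: "integral {s..t} h + integral {t..sg} h = integral {s..sg} h"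
          by (rule Henstock_Kurzweil_Integration.integral_combine[OF st _ int[OF s(1) ssg]]) (use sgt in simp)
        have c3: "integral {t..sg} h = integral {t..sg} (\<lambda>_. f t)"
        proof (rule integral_spike[OF negligible_sing[of sg]])
          fix x assume x: "x \<in> {t..sg} - {sg}"
          note gb = g_between[OF cl t, of x]
          have "gT T x = t"
          proof (rule ccontr)
            assume "gT T x \<noteq> t"
            then have "t < gT T x" "gT T x < sg" using gb x by auto
            then show False using sig_gap[OF cl t ex gb(3)] x by (simp add: sg_def)
          qed
          then show "f t = h x" by (simp add: h_def)
        qed
        have c4: "integral {t..sg} (\<lambda>_. f t) = f t * mu" using sgt by (simp add: mu_def)
        have b: "\<bar>integral {s..t} h - f t * (t - s)\<bar> \<le> K * (t - s)"
        proof (rule int_dev_bound[OF st int[OF s(1) st]])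
          fix r assume r: "r \<in> {s..t}"
          note gb = g_between[OF cl s(1), of r]
          have "\<bar>gT T r - t\<bar> < d1" using gb r s(2) by (auto simp: \<delta>_def)
          then have "\<bar>f (gT T r)\<bar> \<le> B" using dB(2) gb r by auto
          then show "\<bar>h r - f t\<bar> \<le> K" by (simp add: h_def K_def)
        qed
        have "t - s < \<epsilon> * mu / (K + 1)" using s(2) st by (simp add: \<delta>_def)
        then have "K * (t - s) \<le> K * (\<epsilon> * mu / (K + 1))" using K0 by (intro mult_left_mono) auto
        also have "\<dots> \<le> \<epsilon> * mu"
        proof -
          have "K / (K + 1) \<le> 1" using K0 by simp
          then have "(\<epsilon> * mu) * (K / (K + 1)) \<le> (\<epsilon> * mu) * 1" using e mu by (intro mult_left_mono) auto
          then show ?thesis by (simp add: ac_simps)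
        qed
        also have "\<dots> \<le> \<epsilon> * \<bar>sg - s\<bar>" using e ssg st by (intro mult_left_mono) (auto simp: mu_def)
        finally have kb: "K * (t - s) \<le> \<epsilon> * \<bar>sg - s\<bar>" .
        have "F sg - F s - f t * (sg - s) = integral {s..t} h - f t * (t - s)"
          using c1 c2 c3 c4 by (simp add: mu_def algebra_simps)
        then show "\<bar>F sg - F s - f t * (sg - s)\<bar> \<le> \<epsilon> * \<bar>sg - s\<bar>" using b kb by simp
      qed
    qed
  qed
  then show ?thesis by blast
qed

lemma ln_conc: fixes k v :: real assumes "0 \<le> v" "v < 1" "0 \<le> k" "k \<le> 1" shows "k * ln (1 - v) \<le> ln (1 - k * v)"
proof -
  have "(1 - k) * ln 1 + k * ln (1 - v) \<le> ln ((1 - k) *\<^sub>R 1 + k *\<^sub>R (1 - v))"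
    by (rule concave_onD[OF ln_concave]) (use assms in auto)
  then show ?thesis by (simp add: algebra_simps)
qed

lemma filter_T_nontriv:
  assumes unb: "\<forall>r. \<exists>t\<in>T. t > (r::real)"
  shows "inf at_top (principal T) \<noteq> bot"
proof
  assume "inf at_top (principal T) = bot"
  then have "\<forall>\<^sub>F x in inf at_top (principal T). False" by (simp add: trivial_limit_def)
  then have "\<forall>\<^sub>F x in at_top. x \<in> T \<longrightarrow> False" by (simp add: eventually_inf_principal)
  then obtain N where "\<forall>n\<ge>N. n \<in> T \<longrightarrow> False" by (auto simp: eventually_at_top_linorder)
  moreover obtain t where "t \<in> T" "t > N" using unb by blast
  ultimately show False by auto
qed

lemma evT: "(\<And>t. t \<in> T \<Longrightarrow> t0 \<le> t \<Longrightarrow> P t) \<Longrightarrow> eventually P (inf at_top (principal (T::real set)))"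
  unfolding eventually_inf_principal eventually_at_top_linorder by blast

lemma dec_lim:
  fixes h :: "real \<Rightarrow> real"
  assumes t0: "t0 \<in> T" and dec: "\<And>u v. u \<in> T \<Longrightarrow> v \<in> T \<Longrightarrow> u \<le> v \<Longrightarrow> h v \<le> h u"
    and lb: "\<And>t. t \<in> T \<Longrightarrow> L \<le> h t"
  shows "(h \<longlongrightarrow> Inf (h ` {t\<in>T. t0 \<le> t})) (inf at_top (principal T))"
    "\<And>t. t \<in> T \<Longrightarrow> t0 \<le> t \<Longrightarrow> Inf (h ` {t\<in>T. t0 \<le> t}) \<le> h t"
    "L \<le> Inf (h ` {t\<in>T. t0 \<le> t})"
proof -
  let ?S = "h ` {t\<in>T. t0 \<le> t}"
  have ne: "?S \<noteq> {}" using t0 by auto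
  have bdd: "bdd_below ?S" using lb by (auto intro!: bdd_belowI[of _ L])
  show lo: "\<And>t. t \<in> T \<Longrightarrow> t0 \<le> t \<Longrightarrow> Inf ?S \<le> h t" by (rule cInf_lower[OF _ bdd]) auto
  show "L \<le> Inf ?S" by (rule cInf_greatest[OF ne]) (use lb in auto)
  show "(h \<longlongrightarrow> Inf ?S) (inf at_top (principal T))"
  proof (rule order_tendstoI)
    fix a assume "a < Inf ?S"
    then show "\<forall>\<^sub>F x in inf at_top (principal T). a < h x"
      using lo by (intro evT[of T t0]) force
  next
    fix a assume "Inf ?S < a"
    then obtain v where "v \<in> ?S" "v < a" using cInf_lessD[OF ne] by blast
    then obtain t1 where t1: "t1 \<in> T" "t0 \<le> t1" "h t1 < a" by auto
    show "\<forall>\<^sub>F x in inf at_top (principal T). h x < a"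
    proof (rule evT[of T t1])
      fix t assume "t \<in> T" "t1 \<le> t"
      then show "h t < a" using dec[OF t1(1) \<open>t \<in> T\<close>] t1 by force
    qed
  qed
qed

theorem theorem26:
  fixes T :: "real set" and t0 x0 y0 z0 N M :: real
    and b c x y z :: "real \<Rightarrow> real"
  assumes TS: "time_scale T"
    and unbdd: "\<forall>r. \<exists>t\<in>T. t > r"
    and t0: "t0 \<in> T"
    and b_nn: "\<forall>t\<in>T. b t \<ge> 0"
    and c_nn: "\<forall>t\<in>T. c t \<ge> 0"
    and reg: "pos_regressive T (\<lambda>t. c t - b t)"
    and x0: "x0 > 0" and y0: "y0 > 0" and z0: "z0 \<ge> 0"
    and N: "N = x0 + y0 + z0"
    and M: "M > 0" "\<forall>t\<in>T. b t \<le> M * (c t - b t)"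
    and int_inf: "delta_integral_diverges T (\<lambda>t. c t - b t) t0"
    and x_pos: "\<forall>t\<in>T. x t > 0"
    and y_pos: "\<forall>t\<in>T. y t > 0"
    and z_nn: "\<forall>t\<in>T. z t \<ge> 0"
    and init: "x t0 = x0" "y t0 = y0" "z t0 = z0"
    and eq_x: "\<forall>t\<in>T. has_delta_derivative T x
                 (- (b t * x t * y (ts_sigma T t) / (x t + y t))) t"
    and eq_y: "\<forall>t\<in>T. has_delta_derivative T y
                 (b t * x t * y (ts_sigma T t) / (x t + y t) - c t * y (ts_sigma T t)) t"
    and eq_z: "\<forall>t\<in>T. has_delta_derivative T z (c t * y (ts_sigma T t)) t"
  shows "\<exists>\<alpha>. 0 < \<alpha> \<and> \<alpha> < N \<and>
           (x \<longlongrightarrow> \<alpha>) (inf at_top (principal T)) \<and>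
           (y \<longlongrightarrow> 0) (inf at_top (principal T)) \<and>
           (z \<longlongrightarrow> N - \<alpha>) (inf at_top (principal T))"
proof -
  have cl: "closed T" using TS by (simp add: time_scale_def)
  have ex: "\<exists>s\<in>T. s > t" for t using unbdd by auto
  define sg where "sg = ts_sigma T"
  have sgT: "sg t \<in> T" if "t \<in> T" for t using sig_props(1)[OF cl that ex] by (simp add: sg_def)
  have sgge: "t \<le> sg t" if "t \<in> T" for t using sig_props(2)[OF cl that ex] by (simp add: sg_def)
  define A where "A = (\<lambda>t. b t * x t * y (sg t) / (x t + y t))"
  have dx: "has_delta_derivative T x (- A t) t" if "t \<in> T" for t using eq_x that by (simp add: A_def sg_def)
  have dy: "has_delta_derivative T y (A t - c t * y (sg t)) t" if "t \<in> T" for t using eq_y that by (simp add: A_def sg_def)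
  have dz: "has_delta_derivative T z (c t * y (sg t)) t" if "t \<in> T" for t using eq_z that by (simp add: sg_def)
  have xp: "x t > 0" and yp: "y t > 0" and bn: "b t \<ge> 0" and cn: "c t \<ge> 0" if "t \<in> T" for t
    using x_pos y_pos b_nn c_nn that by auto
  have cb: "c t - b t \<ge> 0" if "t \<in> T" for t
  proof -
    have "b t \<le> M * (c t - b t)" using M(2) that by auto
    then have "0 \<le> M * (c t - b t)" using bn[OF that] by linarith
    then show ?thesis using M(1) by (simp add: zero_le_mult_iff)
  qed
  define k where "k = M / (1 + M)"
  have k0: "0 < k" "k < 1" using M(1) by (auto simp: k_def)
  have bk: "b t \<le> k * c t" if "t \<in> T" for t
  proof -
    have "b t \<le> M * (c t - b t)" using M(2) that by auto
    then have "b t * (1 + M) \<le> M * c t" by (simp add: algebra_simps)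
    then show ?thesis using M(1) by (simp add: k_def field_simps)
  qed
  have A0: "A t \<ge> 0" if "t \<in> T" for t
    using bn[OF that] xp[OF that] yp[OF that] yp[OF sgT[OF that]] by (simp add: A_def)
  have Ale: "A t \<le> b t * y (sg t)" if "t \<in> T" for t
  proof -
    have q: "x t / (x t + y t) \<le> 1" using xp[OF that] yp[OF that] by simp
    have "A t = (b t * y (sg t)) * (x t / (x t + y t))" by (simp add: A_def)
    also have "\<dots> \<le> (b t * y (sg t)) * 1"
      using q bn[OF that] yp[OF sgT[OF that]] xp[OF that] yp[OF that] by (intro mult_left_mono) auto
    finally show ?thesis by simp
  qed
  have yd_le: "A t - c t * y (sg t) \<le> - (c t - b t) * y (sg t)" if "t \<in> T" for t
    using Ale[OF that] by (simp add: algebra_simps)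
  have xdec: "x v \<le> x u" if "u \<in> T" "v \<in> T" "u \<le> v" for u v
  proof (rule ts_antimono_deriv[OF cl unbdd that, of x "\<lambda>t. - A t"])
    show "has_delta_derivative T x (- A t) t" if "t \<in> T" for t by (rule dx[OF that])
    show "- A t \<le> 0" if "t \<in> T" for t using A0[OF that] by simp
  qed
  have ydec: "y v \<le> y u" if "u \<in> T" "v \<in> T" "u \<le> v" for u v
  proof (rule ts_antimono_deriv[OF cl unbdd that, of y "\<lambda>t. A t - c t * y (sg t)"])
    show "has_delta_derivative T y (A t - c t * y (sg t)) t" if "t \<in> T" for t by (rule dy[OF that])
    show "A t - c t * y (sg t) \<le> 0" if "t \<in> T" for t
    proof -
      have "- (c t - b t) * y (sg t) \<le> 0" using cb[OF that] yp[OF sgT[OF that]]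
        by (simp add: mult_nonpos_nonneg less_imp_le del: minus_diff_eq)
      with yd_le[OF that] show ?thesis by (rule order_trans)
    qed
  qed
  have dn: "has_delta_derivative T (\<lambda>u. x u + y u + z u) 0 t" if "t \<in> T" for t
  proof -
    have "has_delta_derivative T (\<lambda>u. x u + y u + z u) (- A t + (A t - c t * y (sg t)) + c t * y (sg t)) t"
      by (intro dd_add dx dy dz that)
    then show ?thesis by simp
  qed
  have cons: "x t + y t + z t = N" if "t \<in> T" "t0 \<le> t" for t
  proof -
    have "x t0 + y t0 + z t0 \<le> x t + y t + z t"
      by (rule ts_mono_deriv[OF cl unbdd t0 that, of _ "\<lambda>_. 0"]) (use dn in auto)
    moreover have "x t + y t + z t \<le> x t0 + y t0 + z t0"
      by (rule ts_antimono_deriv[OF cl unbdd t0 that, of _ "\<lambda>_. 0"]) (use dn in auto)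
    ultimately show ?thesis using init N by simp
  qed
  define \<alpha> where "\<alpha> = Inf (x ` {t\<in>T. t0 \<le> t})"
  define \<beta> where "\<beta> = Inf (y ` {t\<in>T. t0 \<le> t})"
  have xlim: "(x \<longlongrightarrow> \<alpha>) (inf at_top (principal T))" and xge: "\<And>t. t \<in> T \<Longrightarrow> t0 \<le> t \<Longrightarrow> \<alpha> \<le> x t"
    unfolding \<alpha>_def using dec_lim[OF t0, of x 0] xdec xp by (auto simp: less_imp_le)
  have ylim: "(y \<longlongrightarrow> \<beta>) (inf at_top (principal T))" and yge0: "\<And>t. t \<in> T \<Longrightarrow> t0 \<le> t \<Longrightarrow> \<beta> \<le> y t"
    and b0: "0 \<le> \<beta>"
    unfolding \<beta>_def using dec_lim[OF t0, of y 0] ydec yp by (auto simp: less_imp_le)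
  have yge: "\<beta> \<le> y t" if "t \<in> T" for t
  proof (cases "t0 \<le> t")
    case True then show ?thesis using yge0 that by auto
  next
    case False
    then have "y t0 \<le> y t" using ydec[OF that t0] by simp
    then show ?thesis using yge0[OF t0] by simp
  qed
  have "rd_continuous T (\<lambda>t. c t - b t)" using reg by (simp add: pos_regressive_def)
  then obtain F0 where F0: "\<forall>t\<in>T. has_delta_derivative T F0 (c t - b t) t"
    using antideriv_exists[OF cl unbdd] by blast
  have kap: "ts_kappa T \<subseteq> T" by (auto simp: ts_kappa_def)
  have Tkap: "T \<subseteq> ts_kappa T"
  proof
    fix t assume "t \<in> T"
    moreover obtain s where "s \<in> T" "s > t" using ex[of t] by blast
    then have "\<not> (\<forall>s\<in>T. s \<le> t)" by force
    ultimately show "t \<in> ts_kappa T" by (simp add: ts_kappa_def)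
  qed
  define FS where "FS = (SOME F. \<forall>t\<in>ts_kappa T. has_delta_derivative T F (c t - b t) t)"
  have "\<forall>t\<in>ts_kappa T. has_delta_derivative T FS (c t - b t) t"
    unfolding FS_def by (rule someI[of _ F0]) (use F0 kap in auto)
  then have FSd: "has_delta_derivative T FS (c t - b t) t" if "t \<in> T" for t using Tkap that by auto
  have di: "delta_integral T (\<lambda>t. c t - b t) t0 t = FS t - FS t0" for t
    by (simp add: delta_integral_def FS_def Let_def)
  have beta0: "\<beta> = 0"
  proof (rule ccontr)
    assume "\<beta> \<noteq> 0"
    then have bp: "\<beta> > 0" using b0 by simp
    have dG: "has_delta_derivative T (\<lambda>u. y u + \<beta> * FS u) (A t - c t * y (sg t) + \<beta> * (c t - b t)) t"
      if "t \<in> T" for t by (intro dd_add dd_cmult dy FSd that)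
    have bnd: "FS t - FS t0 \<le> y0 / \<beta>" if "t \<in> T" "t0 \<le> t" for t
    proof -
      have "y t + \<beta> * FS t \<le> y t0 + \<beta> * FS t0"
      proof (rule ts_antimono_deriv[OF cl unbdd t0 that, of _ "\<lambda>t. A t - c t * y (sg t) + \<beta> * (c t - b t)"])
        show "has_delta_derivative T (\<lambda>u. y u + \<beta> * FS u) (A t - c t * y (sg t) + \<beta> * (c t - b t)) t"
          if "t \<in> T" for t by (rule dG[OF that])
        show "A t - c t * y (sg t) + \<beta> * (c t - b t) \<le> 0" if "t \<in> T" for t
        proof -
          have "(c t - b t) * \<beta> \<le> (c t - b t) * y (sg t)"
            using cb[OF that] yge[OF sgT[OF that]] by (intro mult_left_mono) auto
          then show ?thesis using yd_le[OF that] by (simp add: algebra_simps)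
        qed
      qed
      then have "\<beta> * (FS t - FS t0) \<le> y0 - y t" using init by (simp add: algebra_simps)
      also have "\<dots> \<le> y0" using yp[OF that(1)] by simp
      finally show ?thesis using bp by (simp add: field_simps mult.commute)
    qed
    have "filterlim (\<lambda>t. FS t - FS t0) at_top (inf at_top (principal T))"
      using int_inf unfolding delta_integral_diverges_def di .
    then have "\<forall>\<^sub>F t in inf at_top (principal T). y0 / \<beta> + 1 \<le> FS t - FS t0"
      unfolding filterlim_at_top by blast
    moreover have "\<forall>\<^sub>F t in inf at_top (principal T). FS t - FS t0 \<le> y0 / \<beta>"
      using bnd by (intro evT[of T t0])
    ultimately have "\<forall>\<^sub>F t in inf at_top (principal T). False"
      by eventually_elim simp
    then show False using filter_T_nontriv[OF unbdd] by (simp add: trivial_limit_def)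
  qed
  define w where "w = (\<lambda>u. ln (x u) - k * ln (x u + y u))"
  have wmono: "w t0 \<le> w t" if "t \<in> T" "t0 \<le> t" for t
  proof (rule ts_mono_gen[OF cl unbdd t0 that])
    show "(w \<longlongrightarrow> w t) (at t within T)" if "t \<in> T" for t
    proof -
      have "(x \<longlongrightarrow> x t) (at t within T)" by (rule dd_cont[OF dx[OF that] that])
      moreover have "(y \<longlongrightarrow> y t) (at t within T)" by (rule dd_cont[OF dy[OF that] that])
      ultimately show ?thesis unfolding w_def using xp[OF that] yp[OF that]
        by (intro tendsto_intros) auto
    qed
    show "w t \<le> w (ts_sigma T t)" if tT: "t \<in> T" and tl: "t < ts_sigma T t" for t
    proof -
      define mu where "mu = sg t - t"
      have mu: "mu > 0" using tl by (simp add: mu_def sg_def)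
      define S where "S = x t + y t"
      have Sp: "S > 0" using xp[OF tT] yp[OF tT] by (simp add: S_def)
      define Y where "Y = y (sg t)"
      have Yp: "Y > 0" using yp[OF sgT[OF tT]] by (simp add: Y_def)
      define a where "a = mu * Y / S"
      have a0: "a \<ge> 0" using mu Yp Sp by (simp add: a_def)
      have jx: "x (sg t) = x t + (- A t) * mu" using dd_jump[OF dx[OF tT] tT] by (simp add: mu_def sg_def)
      have jy: "y (sg t) = y t + (A t - c t * y (sg t)) * mu" using dd_jump[OF dy[OF tT] tT] by (simp add: mu_def sg_def)
      have ex1: "x (sg t) = x t * (1 - b t * a)"
        using jx Sp by (simp add: A_def a_def S_def Y_def field_simps)
      have "x (sg t) + y (sg t) = S - mu * c t * Y"
        using jx jy by (simp add: S_def Y_def algebra_simps)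
      moreover have "S * (1 - c t * a) = S - mu * c t * Y"
        using Sp by (simp add: a_def right_diff_distrib)
      ultimately have ex2: "x (sg t) + y (sg t) = S * (1 - c t * a)" by simp
      have p1: "1 - b t * a > 0"
        using ex1 xp[OF sgT[OF tT]] xp[OF tT] by (simp add: zero_less_mult_iff)
      have p2: "1 - c t * a > 0"
        using ex2 xp[OF sgT[OF tT]] yp[OF sgT[OF tT]] Sp by (smt (verit) zero_less_mult_iff)
      have v0: "c t * a \<ge> 0" using cn[OF tT] a0 by simp
      have kc: "k * ln (1 - c t * a) \<le> ln (1 - k * (c t * a))"
        by (rule ln_conc) (use v0 p2 k0 in auto)
      have "b t * a \<le> k * (c t * a)" using bk[OF tT] a0 by (simp add: mult_right_mono mult.assoc[symmetric])
      then have lm: "ln (1 - k * (c t * a)) \<le> ln (1 - b t * a)"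
      proof -
        have kv: "k * (c t * a) \<le> c t * a" using k0 v0 by (intro mult_left_le_one_le) auto
        show ?thesis using p1 p2 kv \<open>b t * a \<le> k * (c t * a)\<close> by (subst ln_le_cancel_iff) auto
      qed
      have "w (sg t) = ln (x t) + ln (1 - b t * a) - k * (ln S + ln (1 - c t * a))"
        unfolding w_def ex2 using ex1 xp[OF tT] p1 p2 Sp by (simp add: ln_mult)
      moreover have "w t = ln (x t) - k * ln S" by (simp add: w_def S_def)
      ultimately have "w (sg t) - w t = ln (1 - b t * a) - k * ln (1 - c t * a)" by (simp add: algebra_simps)
      then show ?thesis using kc lm by (simp add: sg_def)
    qed
    show "\<exists>d>0. \<forall>u\<in>T. t < u \<and> u < t + d \<longrightarrow> w t - e * (u - t) \<le> w u"
      if tT: "t \<in> T" and ts: "ts_sigma T t = t" and e: "e > 0" for t e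
    proof -
      have sgt: "sg t = t" using ts by (simp add: sg_def)
      have Dx: "(x has_real_derivative (- A t)) (at t within T)" by (rule dd_real_deriv[OF dx[OF tT] ts])
      have Dy: "(y has_real_derivative (A t - c t * y (sg t))) (at t within T)" by (rule dd_real_deriv[OF dy[OF tT] ts])
      define W where "W = (- A t) / x t - k * (((- A t) + (A t - c t * y (sg t))) / (x t + y t))"
      have Dw: "(w has_real_derivative W) (at t within T)"
        unfolding w_def W_def using Dx Dy xp[OF tT] yp[OF tT]
        by (auto intro!: derivative_eq_intros)
      have W0: "W \<ge> 0"
      proof -
        have xne: "x t \<noteq> 0" and Sne: "x t + y t \<noteq> 0" using xp[OF tT] yp[OF tT] by auto
        have h1: "(- A t) / x t = - (b t * y t / (x t + y t))"
          using xne unfolding A_def sgt by simp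
        have h2: "(- A t) + (A t - c t * y (sg t)) = - (c t * y t)" unfolding sgt by simp
        have "W = - (b t * y t / (x t + y t)) + k * (c t * y t / (x t + y t))"
          unfolding W_def h1 h2 by simp
        also have "\<dots> = (k * c t - b t) * y t / (x t + y t)"
          by (simp add: diff_divide_distrib[symmetric] algebra_simps)
        finally have "W = (k * c t - b t) * y t / (x t + y t)" .
        moreover have "k * c t - b t \<ge> 0" using bk[OF tT] by simp
        ultimately show ?thesis using xp[OF tT] yp[OF tT] by simp
      qed
      from Dw[unfolded has_field_derivative_def has_derivative_within_alt] e
      obtain d where d: "d > 0" "\<forall>u\<in>T. norm (u - t) < d \<longrightarrow> norm (w u - w t - W * (u - t)) \<le> e * norm (u - t)"
        by blast
      show ?thesis
      proof (intro exI[of _ d] conjI ballI impI)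
        show "d > 0" by fact
        fix u assume u: "u \<in> T" "t < u \<and> u < t + d"
        then have "\<bar>w u - w t - W * (u - t)\<bar> \<le> e * (u - t)" using d(2) by auto
        moreover have "W * (u - t) \<ge> 0" using W0 u by simp
        ultimately show "w t - e * (u - t) \<le> w u" by linarith
      qed
    qed
  qed
  define C where "C = ln x0 - k * ln (x0 + y0)"
  have xlow: "exp (C / (1 - k)) \<le> x t" if "t \<in> T" "t0 \<le> t" for t
  proof -
    have "C \<le> ln (x t) - k * ln (x t + y t)" using wmono[OF that] init by (simp add: w_def C_def)
    also have "k * ln (x t) \<le> k * ln (x t + y t)"
      using xp[OF that(1)] yp[OF that(1)] k0 by (intro mult_left_mono) auto
    then have "ln (x t) - k * ln (x t + y t) \<le> (1 - k) * ln (x t)" by (simp add: algebra_simps)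
    finally have "C / (1 - k) \<le> ln (x t)" using k0 by (simp add: field_simps mult.commute)
    then have "exp (C / (1 - k)) \<le> exp (ln (x t))" by simp
    then show ?thesis using xp[OF that(1)] by simp
  qed
  have alpha_pos: "\<alpha> > 0"
  proof -
    have "exp (C / (1 - k)) \<le> \<alpha>" unfolding \<alpha>_def
      by (rule cInf_greatest) (use t0 xlow in auto)
    then show ?thesis by (smt (verit) exp_gt_zero)
  qed
  have alpha_lt: "\<alpha> < N"
  proof -
    have "\<alpha> \<le> x t0" using xge[OF t0] by simp
    then show ?thesis using init N y0 z0 by simp
  qed
  have zlim: "(z \<longlongrightarrow> N - \<alpha>) (inf at_top (principal T))"
  proof -
    have "((\<lambda>t. N - x t - y t) \<longlongrightarrow> N - \<alpha> - \<beta>) (inf at_top (principal T))"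
      by (intro tendsto_intros xlim ylim)
    moreover have "\<forall>\<^sub>F t in inf at_top (principal T). N - x t - y t = z t"
      using cons by (intro evT[of T t0]) (simp add: algebra_simps)
    ultimately have "(z \<longlongrightarrow> N - \<alpha> - \<beta>) (inf at_top (principal T))"
      by (rule Lim_transform_eventually)
    then show ?thesis using beta0 by simp
  qed
  show ?thesis
    using alpha_pos alpha_lt xlim ylim beta0 zlim by blast
qed

end
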